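(* Let $A$ be a bounded distributive lattice and $X$ its Priestley space. The following are equivalent: (1) $A$ is proHeyting; (2) for all clopen upsets $U,V$ of $X$, $X\setminus{\downarrow}(U\setminus V)$ is a DM-set; (3) for every clopen subset $U$ of $X$, $X\setminus{\downarrow}U$ is a DM-set.
   Context: A relative annihilator of $A$ is $\langle a,b\rangle=\{x\in A:a\wedge x\le b\}$; $A$ is proHeyting if every relative annihilator is a normal ideal (a downset $N$ with $N=N^{u\ell}$). The Priestley space $X$ of $A$ is the set of prime filters ordered by inclusion, topologized by the basis $\{\mathfrak s(a)\setminus\mathfrak s(b)\}$ with $\mathfrak s(a)=\{x:a\in x\}$; $\mathfrak s$ is an isomorphism of $A$ onto the clopen upsets of $X$. With ${\sf cl}$ the topological closure, ${\sf cl_2}(S)={\uparrow}{\sf cl}(S)$ and ${\sf int_1}(S)=X\setminus{\downarrow}(X\setminus{\sf int}(S))$, a DM-set is an open upset $U$ with ${\sf int_1\,cl_2}(U)=U$. *)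

theory Defs
  imports "HOL-Analysis.Analysis"
begin

(* A bounded distributive lattice is rendered as a type of class
   {bounded_lattice, distrib_lattice}; A is the whole type. *)

definition upper_bounds :: "'a::order set \<Rightarrow> 'a set" where
  "upper_bounds S = {x. \<forall>s\<in>S. s \<le> x}"

definition lower_bounds :: "'a::order set \<Rightarrow> 'a set" where
  "lower_bounds S = {x. \<forall>s\<in>S. x \<le> s}"

definition is_downset :: "'a::order set \<Rightarrow> bool" where
  "is_downset N \<longleftrightarrow> (\<forall>x y. y \<in> N \<longrightarrow> x \<le> y \<longrightarrow> x \<in> N)"

definition normal_ideal :: "'a::order set \<Rightarrow> bool" where
  "normal_ideal N \<longleftrightarrow> is_downset N \<and> N = lower_bounds (upper_bounds N)"

definition rel_ann :: "'a::lattice \<Rightarrow> 'a \<Rightarrow> 'a set" where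
  "rel_ann a b = {x. inf a x \<le> b}"

definition proHeyting :: "'a::{bounded_lattice,distrib_lattice} itself \<Rightarrow> bool" where
  "proHeyting (_::'a itself) \<longleftrightarrow> (\<forall>a b :: 'a. normal_ideal (rel_ann a b))"

definition prime_filter :: "'a::{bounded_lattice,distrib_lattice} set \<Rightarrow> bool" where
  "prime_filter F \<longleftrightarrow>
     F \<noteq> {} \<and> bot \<notin> F \<and>
     (\<forall>x y. x \<in> F \<longrightarrow> x \<le> y \<longrightarrow> y \<in> F) \<and>
     (\<forall>x y. x \<in> F \<longrightarrow> y \<in> F \<longrightarrow> inf x y \<in> F) \<and>
     (\<forall>x y. sup x y \<in> F \<longrightarrow> x \<in> F \<or> y \<in> F)"

(* the carrier X of the Priestley space: all prime filters, ordered by inclusion *)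
definition pspace :: "'a::{bounded_lattice,distrib_lattice} itself \<Rightarrow> 'a set set" where
  "pspace _ = {F. prime_filter F}"

definition stone :: "'a::{bounded_lattice,distrib_lattice} \<Rightarrow> 'a set set" where
  "stone a = {x \<in> pspace TYPE('a). a \<in> x}"

definition ptop :: "'a::{bounded_lattice,distrib_lattice} itself \<Rightarrow> 'a set topology" where
  "ptop _ = topology_generated_by {stone a - stone b | a b :: 'a. True}"

definition down_X :: "'a::{bounded_lattice,distrib_lattice} set set \<Rightarrow> 'a set set" where
  "down_X S = {x \<in> pspace TYPE('a). \<exists>y\<in>S. x \<subseteq> y}"

definition up_X :: "'a::{bounded_lattice,distrib_lattice} set set \<Rightarrow> 'a set set" where
  "up_X S = {x \<in> pspace TYPE('a). \<exists>y\<in>S. y \<subseteq> x}"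

definition is_upset_X :: "'a::{bounded_lattice,distrib_lattice} set set \<Rightarrow> bool" where
  "is_upset_X U \<longleftrightarrow> U \<subseteq> pspace TYPE('a) \<and>
     (\<forall>x y. x \<in> U \<longrightarrow> y \<in> pspace TYPE('a) \<longrightarrow> x \<subseteq> y \<longrightarrow> y \<in> U)"

definition cl2 :: "'a::{bounded_lattice,distrib_lattice} set set \<Rightarrow> 'a set set" where
  "cl2 S = up_X (ptop TYPE('a) closure_of S)"

definition int1 :: "'a::{bounded_lattice,distrib_lattice} set set \<Rightarrow> 'a set set" where
  "int1 S = pspace TYPE('a) - down_X (pspace TYPE('a) - ptop TYPE('a) interior_of S)"

definition DM_set :: "'a::{bounded_lattice,distrib_lattice} set set \<Rightarrow> bool" where
  "DM_set U \<longleftrightarrow> openin (ptop TYPE('a)) U \<and> is_upset_X U \<and> int1 (cl2 U) = U"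

definition clopen_X :: "'a::{bounded_lattice,distrib_lattice} set set \<Rightarrow> bool" where
  "clopen_X U \<longleftrightarrow> openin (ptop TYPE('a)) U \<and> closedin (ptop TYPE('a)) U"

end

theory Submission
  imports Defs
begin


abbreviation PX :: "'a::{bounded_lattice,distrib_lattice} set set" where
  "PX \<equiv> pspace TYPE('a)"
abbreviation PT :: "'a::{bounded_lattice,distrib_lattice} set topology" where
  "PT \<equiv> ptop TYPE('a)"

lemma pf_up: "prime_filter x \<Longrightarrow> a \<in> x \<Longrightarrow> a \<le> b \<Longrightarrow> b \<in> x"
  unfolding prime_filter_def by blast

lemma pf_top: "prime_filter (x::'a::{bounded_lattice,distrib_lattice} set) \<Longrightarrow> top \<in> x"
  unfolding prime_filter_def by auto

lemma pf_bot: "prime_filter (x::'a::{bounded_lattice,distrib_lattice} set) \<Longrightarrow> bot \<notin> x"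
  unfolding prime_filter_def by auto

lemma pf_inf: "prime_filter x \<Longrightarrow> inf a b \<in> x \<longleftrightarrow> a \<in> x \<and> b \<in> x"
  unfolding prime_filter_def by (meson inf.cobounded1 inf.cobounded2)

lemma pf_sup: "prime_filter x \<Longrightarrow> sup a b \<in> x \<longleftrightarrow> a \<in> x \<or> b \<in> x"
  unfolding prime_filter_def by (meson sup.cobounded1 sup.cobounded2)

definition meetl :: "'a::bounded_lattice list \<Rightarrow> 'a" where
  "meetl xs = foldr inf xs top"
definition joinl :: "'a::bounded_lattice list \<Rightarrow> 'a" where
  "joinl xs = foldr sup xs bot"

lemma pf_meetl: "prime_filter x \<Longrightarrow> meetl cs \<in> x \<longleftrightarrow> (\<forall>c\<in>set cs. c \<in> x)"
  by (induction cs) (auto simp: meetl_def pf_inf pf_top)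

lemma pf_joinl: "prime_filter x \<Longrightarrow> joinl cs \<in> x \<longleftrightarrow> (\<exists>c\<in>set cs. c \<in> x)"
  by (induction cs) (auto simp: joinl_def pf_sup pf_bot)

lemma meetl_le: "c \<in> set cs \<Longrightarrow> meetl cs \<le> c"
  by (induction cs) (auto simp: meetl_def intro: le_infI2)

lemma le_joinl: "c \<in> set cs \<Longrightarrow> c \<le> joinl cs"
  by (induction cs) (auto simp: joinl_def intro: le_supI2)

lemma le_meetl: "(\<forall>c\<in>set cs. d \<le> c) \<Longrightarrow> d \<le> meetl cs"
  by (induction cs) (auto simp: meetl_def)

lemma joinl_le: "(\<forall>c\<in>set cs. c \<le> d) \<Longrightarrow> joinl cs \<le> d"
  by (induction cs) (auto simp: joinl_def)

definition is_filt :: "'a::{bounded_lattice,distrib_lattice} set \<Rightarrow> bool" where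
  "is_filt G \<longleftrightarrow> G \<noteq> {} \<and> (\<forall>x y. x \<in> G \<longrightarrow> x \<le> y \<longrightarrow> y \<in> G) \<and> (\<forall>x\<in>G. \<forall>y\<in>G. inf x y \<in> G)"

definition is_idl :: "'a::{bounded_lattice,distrib_lattice} set \<Rightarrow> bool" where
  "is_idl I \<longleftrightarrow> bot \<in> I \<and> (\<forall>x y. y \<in> I \<longrightarrow> x \<le> y \<longrightarrow> x \<in> I) \<and> (\<forall>x\<in>I. \<forall>y\<in>I. sup x y \<in> I)"

lemma pft:
  fixes F I :: "'a::{bounded_lattice,distrib_lattice} set"
  assumes F: "is_filt F" and I: "is_idl I" and disj: "F \<inter> I = {}"
  shows "\<exists>P. prime_filter P \<and> F \<subseteq> P \<and> P \<inter> I = {}"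
proof -
  define \<A> where "\<A> = {G. is_filt G \<and> F \<subseteq> G \<and> G \<inter> I = {}}"
  have ne: "\<A> \<noteq> {}" using F disj unfolding \<A>_def by blast
  have ch: "\<Union>\<C> \<in> \<A>" if ne1: "\<C> \<noteq> {}" and chn: "subset.chain \<A> \<C>" for \<C>
  proof -
    have C1: "\<C> \<subseteq> \<A>" using chn unfolding subset.chain_def by blast
    have C2: "G \<subseteq> H \<or> H \<subseteq> G" if "G \<in> \<C>" "H \<in> \<C>" for G H
      using chn that unfolding subset.chain_def by blast
    have Cf: "is_filt G" "F \<subseteq> G" "G \<inter> I = {}" if "G \<in> \<C>" for G
      using C1 that unfolding \<A>_def by auto
    obtain G0 where G0: "G0 \<in> \<C>" using ne1 by blast
    have "is_filt (\<Union>\<C>)"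
      unfolding is_filt_def
    proof (intro conjI allI impI ballI)
      show "\<Union>\<C> \<noteq> {}" using Cf(1)[OF G0] G0 unfolding is_filt_def by blast
    next
      fix x y assume "x \<in> \<Union>\<C>" "x \<le> y"
      then obtain G where "G \<in> \<C>" "x \<in> G" by blast
      with Cf(1)[OF this(1)] \<open>x \<le> y\<close> have "y \<in> G" unfolding is_filt_def by blast
      with \<open>G \<in> \<C>\<close> show "y \<in> \<Union>\<C>" by blast
    next
      fix x y assume "x \<in> \<Union>\<C>" "y \<in> \<Union>\<C>"
      then obtain G H where GH: "x \<in> G" "y \<in> H" "G \<in> \<C>" "H \<in> \<C>" by blast
      show "inf x y \<in> \<Union>\<C>"
      proof (cases "G \<subseteq> H")
        case True
        then have "inf x y \<in> H" using GH Cf(1)[OF GH(4)] unfolding is_filt_def by blast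
        then show ?thesis using GH by blast
      next
        case False
        then have "H \<subseteq> G" using C2[OF GH(3,4)] by blast
        then have "inf x y \<in> G" using GH Cf(1)[OF GH(3)] unfolding is_filt_def by blast
        then show ?thesis using GH by blast
      qed
    qed
    moreover have "F \<subseteq> \<Union>\<C>" using G0 Cf(2)[OF G0] by blast
    moreover have "\<Union>\<C> \<inter> I = {}" using Cf(3) by blast
    ultimately show ?thesis unfolding \<A>_def by blast
  qed
  obtain M where M: "M \<in> \<A>" and max: "\<And>G. G \<in> \<A> \<Longrightarrow> M \<subseteq> G \<Longrightarrow> G = M"
    using subset_Zorn_nonempty[OF ne ch] by blast
  have Mf: "is_filt M" "F \<subseteq> M" "M \<inter> I = {}" using M unfolding \<A>_def by auto
  have ext: "\<exists>m\<in>M. \<exists>i\<in>I. inf m x \<le> i" if "x \<notin> M" for x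
  proof (rule ccontr)
    assume na: "\<not> ?thesis"
    define G where "G = {d. \<exists>m\<in>M. inf m x \<le> d}"
    have "is_filt G" unfolding is_filt_def G_def
    proof (intro conjI allI impI ballI)
      show "{d. \<exists>m\<in>M. inf m x \<le> d} \<noteq> {}" using Mf(1) unfolding is_filt_def by blast
    next
      fix a b assume "a \<in> {d. \<exists>m\<in>M. inf m x \<le> d}" "a \<le> b"
      then show "b \<in> {d. \<exists>m\<in>M. inf m x \<le> d}" by (auto intro: order_trans)
    next
      fix a b assume "a \<in> {d. \<exists>m\<in>M. inf m x \<le> d}" "b \<in> {d. \<exists>m\<in>M. inf m x \<le> d}"
      then obtain m1 m2 where m: "m1 \<in> M" "m2 \<in> M" "inf m1 x \<le> a" "inf m2 x \<le> b" by auto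
      have "inf m1 m2 \<in> M" using m Mf(1) unfolding is_filt_def by blast
      moreover have "inf (inf m1 m2) x \<le> inf a b" using m
        by (meson inf.cobounded1 inf.cobounded2 le_inf_iff order_trans)
      ultimately show "inf a b \<in> {d. \<exists>m\<in>M. inf m x \<le> d}" by blast
    qed
    moreover have "M \<subseteq> G" unfolding G_def by (auto intro: le_infI1)
    moreover have "G \<inter> I = {}" using na unfolding G_def by blast
    ultimately have "G \<in> \<A>" using Mf unfolding \<A>_def by blast
    with \<open>M \<subseteq> G\<close> max have "G = M" by blast
    moreover have "x \<in> G"
    proof -
      obtain m where "m \<in> M" using Mf(1) unfolding is_filt_def by blast
      then show ?thesis unfolding G_def using inf.cobounded2 by blast
    qed
    ultimately show False using that by blast
  qed
  have "prime_filter M"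
    unfolding prime_filter_def
  proof (intro conjI allI impI)
    show "M \<noteq> {}" using Mf(1) unfolding is_filt_def by blast
    show "bot \<notin> M" using Mf(3) I unfolding is_idl_def by blast
  next
    fix a b assume "a \<in> M" "a \<le> b" then show "b \<in> M" using Mf(1) unfolding is_filt_def by blast
  next
    fix a b assume "a \<in> M" "b \<in> M" then show "inf a b \<in> M" using Mf(1) unfolding is_filt_def by blast
  next
    fix a b assume ab: "sup a b \<in> M"
    show "a \<in> M \<or> b \<in> M"
    proof (rule ccontr)
      assume "\<not> (a \<in> M \<or> b \<in> M)"
      then obtain m1 i1 m2 i2 where m: "m1 \<in> M" "i1 \<in> I" "inf m1 a \<le> i1" "m2 \<in> M" "i2 \<in> I" "inf m2 b \<le> i2"
        using ext[of a] ext[of b] by blast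
      define m where "m = inf (inf m1 m2) (sup a b)"
      have "m \<in> M" using m ab Mf(1) unfolding is_filt_def m_def by blast
      moreover have "m = sup (inf (inf m1 m2) a) (inf (inf m1 m2) b)"
        unfolding m_def by (rule inf_sup_distrib1)
      moreover have "inf (inf m1 m2) a \<le> i1" using m(3) by (meson inf.cobounded1 inf_mono order_refl order_trans)
      moreover have "inf (inf m1 m2) b \<le> i2" using m(6) by (meson inf.cobounded2 inf_mono order_refl order_trans)
      ultimately have "m \<le> sup i1 i2" by (metis sup_mono)
      moreover have "sup i1 i2 \<in> I" using m I unfolding is_idl_def by blast
      ultimately have "m \<in> I" using I unfolding is_idl_def by blast
      with \<open>m \<in> M\<close> Mf(3) show False by blast
    qed
  qed
  then show ?thesis using Mf by blast
qed

lemma pft_elem: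
  fixes a b :: "'a::{bounded_lattice,distrib_lattice}"
  assumes "\<not> a \<le> b"
  shows "\<exists>x\<in>PX. a \<in> x \<and> b \<notin> x"
proof -
  have "is_filt {d. a \<le> d}" unfolding is_filt_def by (auto intro: order_trans)
  moreover have "is_idl {d. d \<le> b}" unfolding is_idl_def by (auto intro: order_trans)
  moreover have "{d. a \<le> d} \<inter> {d. d \<le> b} = {}" using assms by (auto intro: order_trans)
  ultimately obtain P where "prime_filter P" "{d. a \<le> d} \<subseteq> P" "P \<inter> {d. d \<le> b} = {}"
    using pft by blast
  then show ?thesis unfolding pspace_def by auto
qed



lemma stone_sub: "stone a \<subseteq> PX"
  by (auto simp: stone_def)

lemma mem_PX: "x \<in> PX \<longleftrightarrow> prime_filter x"
  by (simp add: pspace_def)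

lemma stone_inf: "stone (inf a b) = stone a \<inter> stone b"
  by (auto simp: stone_def pspace_def pf_inf)

lemma stone_sup: "stone (sup a b) = stone a \<union> stone b"
  by (auto simp: stone_def pspace_def pf_sup)

lemma stone_top: "stone (top::'a::{bounded_lattice,distrib_lattice}) = PX"
  by (auto simp: stone_def pspace_def pf_top)

lemma stone_bot: "stone (bot::'a::{bounded_lattice,distrib_lattice}) = {}"
  by (auto simp: stone_def pspace_def pf_bot)

lemma stone_mono: "a \<le> b \<Longrightarrow> stone a \<subseteq> stone b"
  by (auto simp: stone_def pspace_def intro: pf_up)

lemma stone_le: "stone a \<subseteq> stone b \<Longrightarrow> a \<le> b"
  using pft_elem[of a b] by (auto simp: stone_def)


lemma topspace_PT: "topspace (PT::'a::{bounded_lattice,distrib_lattice} set topology) = PX"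
proof -
  have "\<Union>{stone a - stone b | a b :: 'a. True} = PX"
  proof
    show "\<Union>{stone a - stone b | a b :: 'a. True} \<subseteq> PX" using stone_sub by blast
    have "stone (top::'a) - stone bot \<in> {stone a - stone b | a b :: 'a. True}" by blast
    moreover have "stone (top::'a) - stone bot = PX" by (simp add: stone_top stone_bot)
    ultimately show "PX \<subseteq> \<Union>{stone a - stone b | a b :: 'a. True}"
      by (metis Union_upper)
  qed
  then show ?thesis unfolding ptop_def topology_generated_by_topspace by simp
qed

lemma open_basic: "openin PT (stone a - stone b)"
  unfolding ptop_def by (rule topology_generated_by_Basis) blast

lemma open_stone: "openin PT (stone a)"
  using open_basic[of a bot] by (simp add: stone_bot)

lemma open_cstone: "openin PT (PX - stone b)"
  using open_basic[of top b] by (simp add: stone_top)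

lemma closed_stone: "closedin PT (stone a)"
  unfolding closedin_def topspace_PT using stone_sub open_cstone by blast

lemma closed_cstone: "closedin PT (PX - stone a)"
  unfolding closedin_def topspace_PT using stone_sub open_stone
  by (metis Diff_Diff_Int Diff_subset inf.absorb_iff2)

lemma basis_PT:
  fixes U :: "'a::{bounded_lattice,distrib_lattice} set set"
  assumes "openin PT U" "x \<in> U"
  shows "\<exists>a b. x \<in> stone a - stone b \<and> stone a - stone b \<subseteq> U"
proof -
  have "generate_topology_on {stone a - stone b | a b :: 'a. True} U"
    using assms(1) unfolding ptop_def by (simp add: openin_topology_generated_by_iff)
  then show ?thesis using assms(2)
  proof (induction arbitrary: x)
    case Empty
    then show ?case by simp
  next
    case (Int A B)
    then obtain a1 b1 a2 b2 where 1: "x \<in> stone a1 - stone b1" "stone a1 - stone b1 \<subseteq> A"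
      and 2: "x \<in> stone a2 - stone b2" "stone a2 - stone b2 \<subseteq> B" by (meson IntD1 IntD2)
    have "stone (inf a1 a2) - stone (sup b1 b2) = (stone a1 - stone b1) \<inter> (stone a2 - stone b2)"
      by (auto simp: stone_inf stone_sup)
    then show ?case using 1 2 by blast
  next
    case (UN K)
    then show ?case by blast
  next
    case (Basis s)
    then show ?case by blast
  qed
qed


lemma meetl_append: "meetl (xs @ ys) = inf (meetl xs) (meetl ys)"
  by (induction xs) (auto simp: meetl_def inf_assoc)

lemma joinl_append: "joinl (xs @ ys) = sup (joinl xs) (joinl ys)"
  by (induction xs) (auto simp: joinl_def sup_assoc)

lemma compact_PT: "compact_space (PT::'a::{bounded_lattice,distrib_lattice} set topology)"
proof -
  define B' where "B' = {stone a | a::'a. True} \<union> {PX - stone b | b::'a. True}"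
  define T' where "T' = topology (arbitrary union_of (finite intersection_of (\<lambda>x. x \<in> B') relative_to PX))"
  have fin: "\<exists>C'. finite C' \<and> C' \<subseteq> C \<and> PX \<subseteq> \<Union>C'" if CB: "C \<subseteq> B'" and cov: "PX \<subseteq> \<Union>C" for C
  proof -
    define S where "S = {a. stone a \<in> C}"
    define T where "T = {b. PX - stone b \<in> C}"
    define Fil where "Fil = {d. \<exists>ts. set ts \<subseteq> T \<and> meetl ts \<le> d}"
    define Idl where "Idl = {d. \<exists>ss. set ss \<subseteq> S \<and> d \<le> joinl ss}"
    show ?thesis
    proof (cases "Fil \<inter> Idl = {}")
      case False
      then obtain d ts ss where d: "set ts \<subseteq> T" "meetl ts \<le> d" "set ss \<subseteq> S" "d \<le> joinl ss"
        unfolding Fil_def Idl_def by blast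
      define C' where "C' = stone ` set ss \<union> (\<lambda>b. PX - stone b) ` set ts"
      have "finite C'" unfolding C'_def by simp
      moreover have "C' \<subseteq> C" unfolding C'_def using d S_def T_def by blast
      moreover have "PX \<subseteq> \<Union>C'"
      proof
        fix x :: "'a set" assume x: "x \<in> PX"
        then have px: "prime_filter x" by (simp add: mem_PX)
        show "x \<in> \<Union>C'"
        proof (cases "\<forall>t\<in>set ts. t \<in> x")
          case True
          then have "meetl ts \<in> x" using pf_meetl[OF px] by blast
          then have "joinl ss \<in> x" using d pf_up[OF px] by (meson order_trans)
          then obtain s where "s \<in> set ss" "s \<in> x" using pf_joinl[OF px] by blast
          then show ?thesis unfolding C'_def using x by (auto simp: stone_def)
        next
          case False
          then obtain t where "t \<in> set ts" "t \<notin> x" by blast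
          then show ?thesis unfolding C'_def using x by (auto simp: stone_def)
        qed
      qed
      ultimately show ?thesis by blast
    next
      case True
      have "is_filt Fil" unfolding is_filt_def
      proof (intro conjI allI impI ballI)
        have "top \<in> Fil" unfolding Fil_def by (intro CollectI exI[of _ "[]"]) auto
        then show "Fil \<noteq> {}" by blast
      next
        fix x y assume "x \<in> Fil" "x \<le> y" then show "y \<in> Fil" unfolding Fil_def by (auto intro: order_trans)
      next
        fix x y assume "x \<in> Fil" "y \<in> Fil"
        then obtain t1 t2 where "set t1 \<subseteq> T" "meetl t1 \<le> x" "set t2 \<subseteq> T" "meetl t2 \<le> y"
          unfolding Fil_def by blast
        then have "set (t1 @ t2) \<subseteq> T" "meetl (t1 @ t2) \<le> inf x y"
          by (auto simp: meetl_append intro: le_infI1 le_infI2)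
        then show "inf x y \<in> Fil" unfolding Fil_def by blast
      qed
      moreover have "is_idl Idl" unfolding is_idl_def
      proof (intro conjI allI impI ballI)
        show "bot \<in> Idl" unfolding Idl_def by (rule CollectI, rule exI[of _ "[]"]) auto
      next
        fix x y assume "y \<in> Idl" "x \<le> y" then show "x \<in> Idl" unfolding Idl_def by (auto intro: order_trans)
      next
        fix x y assume "x \<in> Idl" "y \<in> Idl"
        then obtain t1 t2 where "set t1 \<subseteq> S" "x \<le> joinl t1" "set t2 \<subseteq> S" "y \<le> joinl t2"
          unfolding Idl_def by blast
        then have "set (t1 @ t2) \<subseteq> S" "sup x y \<le> joinl (t1 @ t2)"
          by (auto simp: joinl_append intro: le_supI1 le_supI2)
        then show "sup x y \<in> Idl" unfolding Idl_def by blast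
      qed
      ultimately obtain P where P: "prime_filter P" "Fil \<subseteq> P" "P \<inter> Idl = {}"
        using pft True by blast
      then have "P \<in> PX" by (simp add: mem_PX)
      then obtain c where c: "c \<in> C" "P \<in> c" using cov by blast
      then have "c \<in> B'" using CB by blast
      then show ?thesis
      proof (unfold B'_def, elim UnE CollectE exE conjE)
        fix a assume ca: "c = stone a"
        then have "a \<in> S" using c S_def by simp
        then have "a \<in> Idl" unfolding Idl_def
          by (intro CollectI exI[of _ "[a]"]) (auto simp: joinl_def)
        moreover have "a \<in> P" using c ca by (simp add: stone_def)
        ultimately show ?thesis using P by blast
      next
        fix b assume cb: "c = PX - stone b"
        then have "b \<in> T" using c T_def by simp
        then have "b \<in> Fil" unfolding Fil_def
          by (intro CollectI exI[of _ "[b]"]) (auto simp: meetl_def)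
        then have "b \<in> P" using P by blast
        moreover have "b \<notin> P" using c cb \<open>P \<in> PX\<close> by (simp add: stone_def)
        ultimately show ?thesis by blast
      qed
    qed
  qed
  have cT: "compact_space T'"
  proof (rule Alexander_subbase_alt[where U=PX and \<B>=B'])
    show "PX \<subseteq> \<Union>B'" unfolding B'_def using stone_top by blast
    show "\<And>C. C \<subseteq> B' \<Longrightarrow> PX \<subseteq> \<Union>C \<Longrightarrow> \<exists>C'. finite C' \<and> C' \<subseteq> C \<and> PX \<subseteq> \<Union>C'"
      using fin by blast
  qed (simp add: T'_def)
  have sub: "openin T' S" if "S \<in> B'" for S
  proof -
    have "S \<subseteq> PX" using that stone_sub unfolding B'_def by blast
    have "((\<lambda>x. x \<in> B') relative_to PX) (PX \<inter> S)"
      by (rule relative_to_inc) (simp add: that)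
    then have "(arbitrary union_of (finite intersection_of (\<lambda>x. x \<in> B') relative_to PX)) S"
      using \<open>S \<subseteq> PX\<close>
      by (metis arbitrary_union_of_inc finite_intersection_of_inc inf.absorb2 relative_to_inc that)
    then show ?thesis unfolding T'_def by (simp add: openin_subbase)
  qed
  have eq: "(PT::'a set topology) = T'"
  proof (subst topology_eq, intro allI iffI)
    fix S :: "'a set set" assume "openin PT S"
    then have g: "generate_topology_on {stone a - stone b | a b :: 'a. True} S"
      unfolding ptop_def by (simp add: openin_topology_generated_by_iff)
    show "openin T' S"
    proof (rule generate_topology_on_coarsest[OF istopology_openin _ g])
      fix s assume "s \<in> {stone a - stone b | a b :: 'a. True}"
      then obtain a b where s: "s = stone a - stone b" by blast
      have "openin T' (stone a)" by (rule sub) (auto simp: B'_def)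
      moreover have "openin T' (PX - stone b)" by (rule sub) (auto simp: B'_def)
      ultimately have "openin T' (stone a \<inter> (PX - stone b))" by (rule openin_Int)
      moreover have "stone a \<inter> (PX - stone b) = s" using s stone_sub by blast
      ultimately show "openin T' s" by simp
    qed
  next
    fix S :: "'a set set" assume "openin T' S"
    moreover have "openin (PT::'a set topology) PX" using openin_topspace[of "PT::'a set topology"] by (simp add: topspace_PT)
    moreover have "\<And>S. S \<in> B' \<Longrightarrow> openin PT S" unfolding B'_def using open_stone open_cstone by blast
    ultimately show "openin PT S" unfolding T'_def
      using minimal_topology_subbase[of "\<lambda>x. x \<in> B'" "PT::'a set topology" PX S] by blast
  qed
  show ?thesis using cT eq by simp
qed



definition upI :: "'a::{bounded_lattice,distrib_lattice} set \<Rightarrow> 'a set set" where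
  "upI I = {x \<in> PX. x \<inter> I \<noteq> {}}"

lemma upI_sub: "upI I \<subseteq> PX"
  by (auto simp: upI_def)

lemma upI_eq: "upI I = \<Union>(stone ` I)"
  by (auto simp: upI_def stone_def)

lemma open_upI: "openin PT (upI I)"
  unfolding upI_eq by (rule openin_Union) (auto intro: open_stone)

lemma upset_upI: "is_upset_X (upI I)"
  unfolding is_upset_X_def upI_def by blast

lemma closed_PT_compact: "closedin PT K \<Longrightarrow> compactin PT K"
  by (rule closedin_compact_space[OF compact_PT])

lemma upI_sub_cl2: "upI I \<subseteq> cl2 (upI I)"
proof
  fix x assume x: "x \<in> upI I"
  then have "x \<in> PT closure_of (upI I)"
    using closure_of_subset[of "upI I" PT] upI_sub topspace_PT by blast
  then show "x \<in> cl2 (upI I)" unfolding cl2_def up_X_def using x upI_sub by blast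
qed

lemma cl2_sub_Fu:
  fixes I :: "'a::{bounded_lattice,distrib_lattice} set"
  shows "cl2 (upI I) \<subseteq> {y \<in> PX. upper_bounds I \<subseteq> y}"
proof -
  define Fu where "Fu = {y \<in> (PX::'a set set). upper_bounds I \<subseteq> y}"
  have eqF: "PX - Fu = \<Union>((\<lambda>e. PX - stone e) ` upper_bounds I)"
    unfolding Fu_def stone_def by auto
  have "openin PT (\<Union>((\<lambda>e. PX - stone e) ` upper_bounds I))"
    by (rule openin_Union) (auto intro: open_cstone)
  then have "openin PT (PX - Fu)" by (simp only: eqF)
  then have cF: "closedin PT Fu" unfolding closedin_def topspace_PT Fu_def by auto
  have "upI I \<subseteq> Fu"
  proof
    fix x assume "x \<in> upI I"
    then obtain c where c: "x \<in> PX" "c \<in> x" "c \<in> I" unfolding upI_def by blast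
    have "e \<in> x" if "e \<in> upper_bounds I" for e
      using that c pf_up[of x c e] by (auto simp: upper_bounds_def mem_PX)
    then show "x \<in> Fu" unfolding Fu_def using c by blast
  qed
  then have "PT closure_of (upI I) \<subseteq> Fu" using closure_of_minimal cF by blast
  then show ?thesis unfolding cl2_def up_X_def Fu_def by blast
qed


lemma int1_iff: "x \<in> int1 S \<longleftrightarrow> x \<in> PX \<and> (\<forall>y\<in>PX. x \<subseteq> y \<longrightarrow> y \<in> PT interior_of S)"
  unfolding int1_def down_X_def by blast

lemma DM_upI:
  fixes I :: "'a::{bounded_lattice,distrib_lattice} set"
  assumes nI: "lower_bounds (upper_bounds I) \<subseteq> I"
  shows "DM_set (upI I)"
proof -
  define W where "W = PT interior_of (cl2 (upI I))"
  have "upI I \<subseteq> W" unfolding W_def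
    by (rule interior_of_maximal[OF upI_sub_cl2 open_upI])
  have WF: "W \<subseteq> {y \<in> PX. upper_bounds I \<subseteq> y}"
    unfolding W_def by (rule order_trans[OF interior_of_subset cl2_sub_Fu])
  have "int1 (cl2 (upI I)) = upI I"
  proof
    show "upI I \<subseteq> int1 (cl2 (upI I))"
    proof
      fix x assume x: "x \<in> upI I"
      have "y \<in> W" if "y \<in> PX" "x \<subseteq> y" for y
      proof -
        have "y \<in> upI I" using x that upset_upI unfolding is_upset_X_def by blast
        then show ?thesis using \<open>upI I \<subseteq> W\<close> by blast
      qed
      then show "x \<in> int1 (cl2 (upI I))" using x upI_sub unfolding int1_iff W_def by blast
    qed
  next
    show "int1 (cl2 (upI I)) \<subseteq> upI I"
    proof
      fix x :: "'a set" assume "x \<in> int1 (cl2 (upI I))"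
      then have x: "x \<in> PX" and xW: "\<And>y. y \<in> PX \<Longrightarrow> x \<subseteq> y \<Longrightarrow> y \<in> W"
        unfolding int1_iff W_def by blast+
      have px: "prime_filter x" using x by (simp add: mem_PX)
      define K where "K = PX - W"
      have "W \<subseteq> PX" unfolding W_def using interior_of_subset_topspace[of PT] topspace_PT by blast
      then have "PX - K = W" unfolding K_def by blast
      moreover have "openin PT W" unfolding W_def by simp
      ultimately have "closedin PT K" unfolding closedin_def topspace_PT K_def by simp
      then have cK: "compactin PT K" by (rule closed_PT_compact)
      have cov: "K \<subseteq> \<Union>((\<lambda>c. PX - stone c) ` x)"
      proof
        fix y assume "y \<in> K"
        then have "y \<in> PX" "\<not> x \<subseteq> y" using xW unfolding K_def by blast+
        then show "y \<in> \<Union>((\<lambda>c. PX - stone c) ` x)" by (auto simp: stone_def)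
      qed
      define \<U> where "\<U> = (\<lambda>c. PX - stone c) ` x"
      have opU: "\<forall>U\<in>\<U>. openin PT U" unfolding \<U>_def using open_cstone by blast
      have "\<forall>\<U>. (\<forall>U\<in>\<U>. openin PT U) \<and> K \<subseteq> \<Union>\<U> \<longrightarrow> (\<exists>\<F>. finite \<F> \<and> \<F> \<subseteq> \<U> \<and> K \<subseteq> \<Union>\<F>)"
        using cK unfolding compactin_def by (rule conjunct2)
      then have "\<exists>\<F>. finite \<F> \<and> \<F> \<subseteq> \<U> \<and> K \<subseteq> \<Union>\<F>"
        using opU cov unfolding \<U>_def by blast
      then obtain \<F> where \<F>: "finite \<F>" "\<F> \<subseteq> (\<lambda>c. PX - stone c) ` x" "K \<subseteq> \<Union>\<F>"
        unfolding \<U>_def by blast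
      obtain C0 where C0: "C0 \<subseteq> x" "finite C0" "\<F> = (\<lambda>c. PX - stone c) ` C0"
        using finite_subset_image[OF \<F>(1,2)] by blast
      obtain cs where cs: "set cs = C0" using finite_list[OF C0(2)] by blast
      define c where "c = meetl cs"
      have cx: "c \<in> x" unfolding c_def using pf_meetl[OF px] cs C0 by blast
      have "stone c \<subseteq> W"
      proof
        fix y assume y: "y \<in> stone c"
        then have "y \<in> PX" "prime_filter y" by (auto simp: stone_def mem_PX)
        then have "\<forall>d\<in>C0. d \<in> y" using y pf_meetl[of y cs] cs unfolding c_def stone_def by blast
        then have "y \<notin> \<Union>\<F>" using C0(3) by (auto simp: stone_def)
        then show "y \<in> W" using \<F>(3) \<open>y \<in> PX\<close> unfolding K_def by blast
      qed
      have "c \<in> lower_bounds (upper_bounds I)"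
        unfolding lower_bounds_def
      proof (intro CollectI ballI)
        fix e assume e: "e \<in> upper_bounds I"
        have "stone c \<subseteq> stone e"
          using \<open>stone c \<subseteq> W\<close> WF e by (auto simp: stone_def)
        then show "c \<le> e" by (rule stone_le)
      qed
      then have "c \<in> I" using nI by blast
      then show "x \<in> upI I" using cx x unfolding upI_def by blast
    qed
  qed
  then show ?thesis unfolding DM_set_def using open_upI upset_upI by blast
qed



lemma lub_mono: "J \<subseteq> K \<Longrightarrow> lower_bounds (upper_bounds J) \<subseteq> lower_bounds (upper_bounds K)"
  unfolding lower_bounds_def upper_bounds_def by blast

lemma sub_lub: "J \<subseteq> lower_bounds (upper_bounds J)"
  unfolding lower_bounds_def upper_bounds_def by blast

lemma normal_of_DM:
  fixes I :: "'a::{bounded_lattice,distrib_lattice} set"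
  assumes iI: "is_idl I" and eq: "int1 (cl2 (upI I)) = upI I"
  shows "lower_bounds (upper_bounds I) \<subseteq> I"
proof
  fix c assume c: "c \<in> lower_bounds (upper_bounds I)"
  show "c \<in> I"
  proof (rule ccontr)
    assume cI: "c \<notin> I"
    have "stone c \<subseteq> cl2 (upI I)"
    proof
      fix y :: "'a set" assume y: "y \<in> stone c"
      then have yP: "y \<in> PX" "prime_filter y" "c \<in> y" by (auto simp: stone_def mem_PX)
      show "y \<in> cl2 (upI I)"
      proof (rule ccontr)
        assume ny: "y \<notin> cl2 (upI I)"
        define K where "K = PT closure_of (upI I)"
        have nz: "\<not> z \<subseteq> y" if "z \<in> K" for z
          using ny that yP unfolding cl2_def up_X_def K_def by blast
        have KP: "K \<subseteq> PX" unfolding K_def using closure_of_subset_topspace[of PT] topspace_PT by blast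
        have cK: "compactin PT K" unfolding K_def by (rule closed_PT_compact) simp
        define \<U> where "\<U> = stone ` {e. e \<notin> y}"
        have opU: "\<forall>U\<in>\<U>. openin PT U" unfolding \<U>_def using open_stone by blast
        have cov: "K \<subseteq> \<Union>\<U>"
        proof
          fix z assume z: "z \<in> K"
          then obtain e where "e \<in> z" "e \<notin> y" using nz by blast
          then show "z \<in> \<Union>\<U>" unfolding \<U>_def using z KP by (auto simp: stone_def)
        qed
        have "\<forall>\<U>. (\<forall>U\<in>\<U>. openin PT U) \<and> K \<subseteq> \<Union>\<U> \<longrightarrow> (\<exists>\<F>. finite \<F> \<and> \<F> \<subseteq> \<U> \<and> K \<subseteq> \<Union>\<F>)"
          using cK unfolding compactin_def by (rule conjunct2)
        then have "\<exists>\<F>. finite \<F> \<and> \<F> \<subseteq> \<U> \<and> K \<subseteq> \<Union>\<F>"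
          using opU cov by blast
        then obtain \<F> where \<F>: "finite \<F>" "\<F> \<subseteq> stone ` {e. e \<notin> y}" "K \<subseteq> \<Union>\<F>"
          unfolding \<U>_def by blast
        obtain E0 where E0: "E0 \<subseteq> {e. e \<notin> y}" "finite E0" "\<F> = stone ` E0"
          using finite_subset_image[OF \<F>(1,2)] by blast
        obtain es where es: "set es = E0" using finite_list[OF E0(2)] by blast
        define e where "e = joinl es"
        have ey: "e \<notin> y" unfolding e_def using pf_joinl[OF yP(2)] es E0 by blast
        have Ke: "K \<subseteq> stone e"
        proof
          fix z assume z: "z \<in> K"
          then obtain d where d: "d \<in> E0" "z \<in> stone d" using \<F> E0 by blast
          then have "d \<le> e" unfolding e_def using es le_joinl by blast
          then show "z \<in> stone e" using d stone_mono by blast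
        qed
        have "upI I \<subseteq> K" unfolding K_def
          using closure_of_subset[of "upI I" PT] upI_sub topspace_PT by blast
        have "e \<in> upper_bounds I"
          unfolding upper_bounds_def
        proof (intro CollectI ballI)
          fix i assume i: "i \<in> I"
          have "stone i \<subseteq> upI I" unfolding upI_def stone_def using i by blast
          then have "stone i \<subseteq> stone e" using \<open>upI I \<subseteq> K\<close> Ke by blast
          then show "i \<le> e" by (rule stone_le)
        qed
        then have "c \<le> e" using c unfolding lower_bounds_def by blast
        then have "e \<in> y" using yP pf_up by blast
        then show False using ey by blast
      qed
    qed
    then have sW: "stone c \<subseteq> PT interior_of (cl2 (upI I))"
      by (rule interior_of_maximal[OF _ open_stone])
    have "is_filt {d. c \<le> d}" unfolding is_filt_def by (auto intro: order_trans)
    moreover have "{d. c \<le> d} \<inter> I = {}"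
      using iI cI unfolding is_idl_def by blast
    ultimately obtain x where x: "prime_filter x" "{d. c \<le> d} \<subseteq> x" "x \<inter> I = {}"
      using pft[OF _ iI] by blast
    have xP: "x \<in> PX" "c \<in> x" using x by (auto simp: mem_PX)
    have "x \<in> int1 (cl2 (upI I))"
      unfolding int1_iff
    proof (intro conjI ballI impI)
      show "x \<in> PX" by (rule xP(1))
    next
      fix y assume "y \<in> PX" "x \<subseteq> y"
      then have "y \<in> stone c" using xP unfolding stone_def by blast
      then show "y \<in> PT interior_of cl2 (upI I)" using sW by blast
    qed
    then have "x \<in> upI I" using eq by simp
    then show False using x(3) unfolding upI_def by blast
  qed
qed

lemma rel_ann_idl: "is_idl (rel_ann (a::'a::{bounded_lattice,distrib_lattice}) b)"
  unfolding is_idl_def rel_ann_def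
proof (intro conjI allI impI ballI)
  show "bot \<in> {x. inf a x \<le> b}" by simp
next
  fix x y assume "y \<in> {x. inf a x \<le> b}" "x \<le> y"
  then show "x \<in> {x. inf a x \<le> b}" by (auto intro: order_trans inf_mono)
next
  fix x y assume "x \<in> {x. inf a x \<le> b}" "y \<in> {x. inf a x \<le> b}"
  then show "sup x y \<in> {x. inf a x \<le> b}" by (simp add: inf_sup_distrib1)
qed

lemma rel_ann_down: "is_downset (rel_ann (a::'a::{bounded_lattice,distrib_lattice}) b)"
  using rel_ann_idl[of a b] unfolding is_idl_def is_downset_def by blast

lemma down_basic:
  fixes a b :: "'a::{bounded_lattice,distrib_lattice}"
  shows "PX - down_X (stone a - stone b) = upI (rel_ann a b)"
proof
  show "PX - down_X (stone a - stone b) \<subseteq> upI (rel_ann a b)"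
  proof
    fix x :: "'a set" assume x: "x \<in> PX - down_X (stone a - stone b)"
    then have xP: "x \<in> PX" "prime_filter x" by (auto simp: mem_PX)
    show "x \<in> upI (rel_ann a b)"
    proof (rule ccontr)
      assume nx: "x \<notin> upI (rel_ann a b)"
      then have nc: "\<And>c. c \<in> x \<Longrightarrow> \<not> inf c a \<le> b" using xP unfolding upI_def rel_ann_def
        by (auto simp: inf_commute)
      define F where "F = {d. \<exists>c\<in>x. inf c a \<le> d}"
      have tx: "top \<in> x" using pf_top[OF xP(2)] .
      have "is_filt F" unfolding is_filt_def F_def
      proof (intro conjI allI impI ballI)
        show "{d. \<exists>c\<in>x. inf c a \<le> d} \<noteq> {}" using tx by blast
      next
        fix u v assume "u \<in> {d. \<exists>c\<in>x. inf c a \<le> d}" "u \<le> v"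
        then show "v \<in> {d. \<exists>c\<in>x. inf c a \<le> d}" by (auto intro: order_trans)
      next
        fix u v assume "u \<in> {d. \<exists>c\<in>x. inf c a \<le> d}" "v \<in> {d. \<exists>c\<in>x. inf c a \<le> d}"
        then obtain c1 c2 where c: "c1 \<in> x" "c2 \<in> x" "inf c1 a \<le> u" "inf c2 a \<le> v" by blast
        have "inf c1 c2 \<in> x" using c pf_inf[OF xP(2)] by blast
        moreover have "inf (inf c1 c2) a \<le> inf u v" using c
          by (meson inf.bounded_iff inf.cobounded1 inf.cobounded2 order_trans)
        ultimately show "inf u v \<in> {d. \<exists>c\<in>x. inf c a \<le> d}" by blast
      qed
      moreover have "is_idl {d. d \<le> b}" unfolding is_idl_def by (auto intro: order_trans)
      moreover have "F \<inter> {d. d \<le> b} = {}" unfolding F_def using nc by (auto intro: order_trans)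
      ultimately obtain P where P: "prime_filter P" "F \<subseteq> P" "P \<inter> {d. d \<le> b} = {}"
        using pft by blast
      have "a \<in> F" unfolding F_def using tx by auto
      moreover have "x \<subseteq> F" unfolding F_def by (auto intro: le_infI1)
      ultimately have "P \<in> stone a - stone b" "x \<subseteq> P" using P by (auto simp: stone_def mem_PX)
      then have "x \<in> down_X (stone a - stone b)" using xP unfolding down_X_def by blast
      then show False using x by blast
    qed
  qed
next
  show "upI (rel_ann a b) \<subseteq> PX - down_X (stone a - stone b)"
  proof
    fix x :: "'a set" assume "x \<in> upI (rel_ann a b)"
    then obtain c where c: "x \<in> PX" "c \<in> x" "inf a c \<le> b" unfolding upI_def rel_ann_def by blast
    have "x \<notin> down_X (stone a - stone b)"
    proof
      assume "x \<in> down_X (stone a - stone b)"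
      then obtain y where y: "y \<in> stone a" "y \<notin> stone b" "x \<subseteq> y" unfolding down_X_def by blast
      then have py: "prime_filter y" "a \<in> y" by (auto simp: stone_def mem_PX)
      then have "inf a c \<in> y" using c y pf_inf[OF py(1)] by blast
      then have "b \<in> y" using c py pf_up by blast
      then show False using y py by (auto simp: stone_def mem_PX)
    qed
    then show "x \<in> PX - down_X (stone a - stone b)" using c by blast
  qed
qed



lemma down_X_Un: "down_X (A \<union> B) = down_X A \<union> down_X B"
  unfolding down_X_def by blast

lemma down_X_empty: "down_X {} = {}"
  unfolding down_X_def by blast

lemma upI_UNIV: "upI (UNIV::'a::{bounded_lattice,distrib_lattice} set) = PX"
  unfolding upI_def by (auto simp: mem_PX dest: pf_top)

lemma upI_Int:
  fixes I J :: "'a::{bounded_lattice,distrib_lattice} set"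
  assumes "is_downset I" "is_downset J"
  shows "upI (I \<inter> J) = upI I \<inter> upI J"
proof
  show "upI (I \<inter> J) \<subseteq> upI I \<inter> upI J" unfolding upI_def by blast
  show "upI I \<inter> upI J \<subseteq> upI (I \<inter> J)"
  proof
    fix x assume "x \<in> upI I \<inter> upI J"
    then obtain i j where ij: "x \<in> PX" "i \<in> x" "i \<in> I" "j \<in> x" "j \<in> J" unfolding upI_def by blast
    then have "inf i j \<in> x" using pf_inf[of x i j] by (simp add: mem_PX)
    moreover have "inf i j \<in> I" using assms(1) ij unfolding is_downset_def by (meson inf.cobounded1)
    moreover have "inf i j \<in> J" using assms(2) ij unfolding is_downset_def by (meson inf.cobounded2)
    ultimately show "x \<in> upI (I \<inter> J)" using ij unfolding upI_def by blast
  qed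
qed

lemma downset_Inter: "(\<And>p. p \<in> P \<Longrightarrow> is_downset (g p)) \<Longrightarrow> is_downset (\<Inter>(g ` P))"
  unfolding is_downset_def by blast

lemma finite_down:
  fixes P :: "('a::{bounded_lattice,distrib_lattice} \<times> 'a) set"
  assumes "finite P"
  shows "PX - down_X (\<Union>((\<lambda>(a,b). stone a - stone b) ` P)) = upI (\<Inter>((\<lambda>(a,b). rel_ann a b) ` P))"
  using assms
proof (induction P rule: finite_induct)
  case empty
  then show ?case by (simp add: down_X_empty upI_UNIV)
next
  case (insert p P)
  obtain a b where p: "p = (a, b)" by fastforce
  have d1: "is_downset (rel_ann a b)" by (rule rel_ann_down)
  have d2: "is_downset (\<Inter>((\<lambda>(a,b). rel_ann a b) ` P))"
    by (rule downset_Inter) (auto simp: rel_ann_down split: prod.splits)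
  have "PX - down_X (\<Union>((\<lambda>(a,b). stone a - stone b) ` insert p P))
      = (PX - down_X (stone a - stone b)) \<inter> (PX - down_X (\<Union>((\<lambda>(a,b). stone a - stone b) ` P)))"
    by (simp add: p down_X_Un Diff_Un)
  also have "\<dots> = upI (rel_ann a b) \<inter> upI (\<Inter>((\<lambda>(a,b). rel_ann a b) ` P))"
    by (simp only: down_basic insert.IH)
  also have "\<dots> = upI (rel_ann a b \<inter> \<Inter>((\<lambda>(a,b). rel_ann a b) ` P))"
    by (rule upI_Int[OF d1 d2, symmetric])
  also have "\<dots> = upI (\<Inter>((\<lambda>(a,b). rel_ann a b) ` insert p P))"
    by (simp add: p)
  finally show ?case .
qed

lemma clopen_repr:
  fixes U :: "'a::{bounded_lattice,distrib_lattice} set set"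
  assumes "clopen_X U"
  shows "\<exists>P. finite P \<and> U = \<Union>((\<lambda>(a,b). stone a - stone b) ` P)"
proof -
  have oU: "openin PT U" and cU: "closedin PT U" using assms unfolding clopen_X_def by auto
  have cpt: "compactin PT U" using cU by (rule closed_PT_compact)
  define f where "f = (\<lambda>(a::'a,b::'a). stone a - stone b)"
  define Q where "Q = {p. f p \<subseteq> U}"
  define \<U> where "\<U> = f ` Q"
  have opU: "\<forall>V\<in>\<U>. openin PT V" unfolding \<U>_def f_def using open_basic by auto
  have cov: "U \<subseteq> \<Union>\<U>"
  proof
    fix x assume "x \<in> U"
    then obtain a b where "x \<in> stone a - stone b" "stone a - stone b \<subseteq> U"
      using basis_PT[OF oU] by blast
    then have "(a, b) \<in> Q" "x \<in> f (a, b)" unfolding Q_def f_def by auto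
    then show "x \<in> \<Union>\<U>" unfolding \<U>_def by blast
  qed
  have "\<forall>\<U>. (\<forall>U\<in>\<U>. openin PT U) \<and> U \<subseteq> \<Union>\<U> \<longrightarrow> (\<exists>\<F>. finite \<F> \<and> \<F> \<subseteq> \<U> \<and> U \<subseteq> \<Union>\<F>)"
    using cpt unfolding compactin_def by (rule conjunct2)
  then have "\<exists>\<F>. finite \<F> \<and> \<F> \<subseteq> \<U> \<and> U \<subseteq> \<Union>\<F>"
    using opU cov by blast
  then obtain \<F> where \<F>: "finite \<F>" "\<F> \<subseteq> f ` Q" "U \<subseteq> \<Union>\<F>"
    unfolding \<U>_def by blast
  obtain P where P: "P \<subseteq> Q" "finite P" "\<F> = f ` P"
    using finite_subset_image[OF \<F>(1,2)] by blast
  have "\<Union>(f ` P) \<subseteq> U" using P unfolding Q_def by blast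
  then have "U = \<Union>(f ` P)" using \<F>(3) P(3) by blast
  then show ?thesis using P(2) unfolding f_def by blast
qed

lemma normal_Inter:
  assumes "\<And>p. p \<in> P \<Longrightarrow> lower_bounds (upper_bounds (g p)) \<subseteq> g p"
  shows "lower_bounds (upper_bounds (\<Inter>(g ` P))) \<subseteq> \<Inter>(g ` P)"
proof
  fix c assume c: "c \<in> lower_bounds (upper_bounds (\<Inter>(g ` P)))"
  show "c \<in> \<Inter>(g ` P)"
  proof (rule InterI)
    fix J assume "J \<in> g ` P"
    then obtain p where p: "p \<in> P" "J = g p" by blast
    have "\<Inter>(g ` P) \<subseteq> g p" using p by blast
    then have "c \<in> lower_bounds (upper_bounds (g p))" using c lub_mono by blast
    then show "c \<in> J" using assms p by blast
  qed
qed

lemma stone_clopen_up: "clopen_X (stone a) \<and> is_upset_X (stone a)"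
  unfolding clopen_X_def is_upset_X_def
  using open_stone closed_stone stone_sub by (auto simp: stone_def)

theorem theorem5p11:
  fixes A :: "'a::{bounded_lattice,distrib_lattice} itself"
  shows "(proHeyting A
          \<longleftrightarrow> (\<forall>U V :: 'a set set. clopen_X U \<and> is_upset_X U \<and> clopen_X V \<and> is_upset_X V
                 \<longrightarrow> DM_set (pspace TYPE('a) - down_X (U - V))))
       \<and> (proHeyting A
          \<longleftrightarrow> (\<forall>U :: 'a set set. clopen_X U \<longrightarrow> DM_set (pspace TYPE('a) - down_X U)))"
proof -
  have P13: "DM_set (pspace TYPE('a) - down_X U)" if H: "proHeyting A" and cU: "clopen_X U" for U :: "'a set set"
  proof -
    obtain P where P: "finite P" "U = \<Union>((\<lambda>(a,b). stone a - stone b) ` P)"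
      using clopen_repr[OF cU] by blast
    have eq: "PX - down_X U = upI (\<Inter>((\<lambda>(a,b). rel_ann a b) ` P))"
      using finite_down[OF P(1)] P(2) by simp
    have "lower_bounds (upper_bounds (rel_ann a b)) \<subseteq> rel_ann a b" for a b :: 'a
      using H unfolding proHeyting_def normal_ideal_def by blast
    then have "lower_bounds (upper_bounds (\<Inter>((\<lambda>(a,b). rel_ann a b) ` P))) \<subseteq> \<Inter>((\<lambda>(a,b). rel_ann a b) ` P)"
      by (intro normal_Inter) (auto split: prod.splits)
    then show ?thesis unfolding eq by (rule DM_upI)
  qed
  have P32: "DM_set (pspace TYPE('a) - down_X (U - V))"
    if H: "\<forall>U :: 'a set set. clopen_X U \<longrightarrow> DM_set (pspace TYPE('a) - down_X U)"
      and cU: "clopen_X U" and cV: "clopen_X V" for U V :: "'a set set"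
  proof -
    have "clopen_X (U - V)" using cU cV unfolding clopen_X_def by auto
    then show ?thesis using H by blast
  qed
  have P21: "proHeyting A"
    if H: "\<forall>U V :: 'a set set. clopen_X U \<and> is_upset_X U \<and> clopen_X V \<and> is_upset_X V
                 \<longrightarrow> DM_set (pspace TYPE('a) - down_X (U - V))"
  proof -
    have "normal_ideal (rel_ann a b)" for a b :: 'a
    proof -
      have "DM_set (PX - down_X (stone a - stone b))"
        using H stone_clopen_up[of a] stone_clopen_up[of b] by blast
      then have "int1 (cl2 (upI (rel_ann a b))) = upI (rel_ann a b)"
        unfolding down_basic DM_set_def by blast
      then have "lower_bounds (upper_bounds (rel_ann a b)) \<subseteq> rel_ann a b"
        by (rule normal_of_DM[OF rel_ann_idl])
      then show ?thesis unfolding normal_ideal_def using rel_ann_down sub_lub by blast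
    qed
    then show ?thesis unfolding proHeyting_def by blast
  qed
  show ?thesis using P13 P32 P21 by blast
qed

end
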